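(* Let $\tilde v$ be a square-integrable random variable (the payoff), $\tilde s$ a random variable (the signal), $B$ a standard one-dimensional Brownian motion independent of $(\tilde v,\tilde s)$, $Z_t=\sigma_ZB_t$ with $\sigma_Z>0$, and let $X_t=\int_0^t\theta_u\,du$ where $\theta$ is adapted to $\sigma(\tilde s)\vee\mathcal F^Z_t$. Let $Y_t=X_t+Z_t$ and let $\mathcal F^Y_T$ be the $\sigma$-algebra generated by $(Y_t)_{t\le T}$. Suppose that $\mathbb E[\tilde v|\tilde s]$ is measurable with respect to $\sigma(Y_T)$. Then $$\mathbb E[\tilde v|\tilde s]=\mathbb E[\tilde v|\mathcal F^Y_T].$$
   Context: $\mathcal F^Z_t$ denotes the filtration generated by $Z$. $X$ is the informed trader's cumulative order, $Z$ the cumulative noise trade and $Y$ the aggregate order flow observed by market makers. *)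

theory Defs
  imports "HOL-Probability.Probability"
begin

definition std_brownian_motion :: "'a measure \<Rightarrow> (real \<Rightarrow> 'a \<Rightarrow> real) \<Rightarrow> bool" where
  "std_brownian_motion M B \<longleftrightarrow>
     prob_space M \<and>
     (\<forall>t\<ge>0. B t \<in> borel_measurable M) \<and>
     (\<forall>\<omega>\<in>space M. B 0 \<omega> = 0) \<and>
     (\<forall>\<omega>\<in>space M. continuous_on {0..} (\<lambda>t. B t \<omega>)) \<and>
     (\<forall>s t. 0 \<le> s \<and> s < t \<longrightarrow>
        distributed M lborel (\<lambda>\<omega>. B t \<omega> - B s \<omega>) (normal_density 0 (sqrt (t - s)))) \<and>
     (\<forall>(n::nat) (\<tau>::nat \<Rightarrow> real). 0 \<le> \<tau> 0 \<and> (\<forall>i<n. \<tau> i < \<tau> (Suc i)) \<longrightarrow>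
        prob_space.indep_vars M (\<lambda>_. borel) (\<lambda>i \<omega>. B (\<tau> (Suc i)) \<omega> - B (\<tau> i) \<omega>) {..<n})"

definition path_on :: "real set \<Rightarrow> (real \<Rightarrow> 'a \<Rightarrow> real) \<Rightarrow> 'a \<Rightarrow> (real \<Rightarrow> real)" where
  "path_on I P \<omega> = restrict (\<lambda>t. P t \<omega>) I"

text \<open>sigma(s) \<or> F^Z_t: the sigma-algebra generated by s and (Z_u)_{0<=u<=t}.\<close>
definition sig_signal_noise ::
  "'a measure \<Rightarrow> 'b measure \<Rightarrow> ('a \<Rightarrow> 'b) \<Rightarrow> (real \<Rightarrow> 'a \<Rightarrow> real) \<Rightarrow> real \<Rightarrow> 'a measure" where
  "sig_signal_noise M S s Z t =
     vimage_algebra (space M) (\<lambda>\<omega>. (s \<omega>, path_on {0..t} Z \<omega>)) (S \<Otimes>\<^sub>M PiM {0..t} (\<lambda>_. borel))"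

definition sig_path :: "'a measure \<Rightarrow> (real \<Rightarrow> 'a \<Rightarrow> real) \<Rightarrow> real \<Rightarrow> 'a measure" where
  "sig_path M Y T = vimage_algebra (space M) (path_on {0..T} Y) (PiM {0..T} (\<lambda>_. borel))"

end

theory Submission
  imports Defs
begin
lemma vimage_subalg:
  assumes "f \<in> measurable M N"
  shows "subalgebra M (vimage_algebra (space M) f N)"
proof -
  have "sets (vimage_algebra (space M) f N) = {f -` A \<inter> space M | A. A \<in> sets N}"
    using measurable_space[OF assms] by (intro sets_vimage_algebra2) auto
  then show ?thesis unfolding subalgebra_def using measurable_sets[OF assms] by auto
qed

lemma vimage_sets_le:
  assumes "f \<in> measurable H N" "space H = \<Omega>"
  shows "sets (vimage_algebra \<Omega> f N) \<subseteq> sets H"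
proof -
  have "sets (vimage_algebra \<Omega> f N) = {f -` A \<inter> \<Omega> | A. A \<in> sets N}"
    using measurable_space[OF assms(1)] assms(2) by (intro sets_vimage_algebra2) auto
  then show ?thesis using measurable_sets[OF assms(1)] assms(2) by auto
qed

lemma set_integral_compl_space:
  fixes v :: "'a \<Rightarrow> real"
  assumes "integrable M v" "A \<in> sets M"
  shows "(LINT x:(space M - A)|M. v x) = (\<integral>x. v x \<partial>M) - (LINT x:A|M. v x)"
proof -
  have "(LINT x:(space M - A)|M. v x) = (\<integral>x. v x - indicator A x * v x \<partial>M)"
    unfolding set_lebesgue_integral_def
    by (rule Bochner_Integration.integral_cong) (auto split: split_indicator)
  also have "\<dots> = (\<integral>x. v x \<partial>M) - (\<integral>x. indicator A x * v x \<partial>M)"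
    using integrable_mult_indicator[OF assms(2) assms(1)] assms by (intro Bochner_Integration.integral_diff) auto
  finally show ?thesis unfolding set_lebesgue_integral_def by simp
qed

lemma (in prob_space) indep_indicator_integral:
  fixes h :: "'a \<Rightarrow> real"
  assumes indep: "indep_set (sets F1) (sets F2)"
    and sp1: "space F1 = space M" and sp2: "space F2 = space M"
    and sub1: "sets F1 \<subseteq> sets M" and sub2: "sets F2 \<subseteq> sets M"
    and C: "C \<in> sets F1"
    and hm: "h \<in> borel_measurable F2" and hi: "integrable M h"
  shows "(\<integral>x. indicator C x * h x \<partial>M) = prob C * (\<integral>x. h x \<partial>M)"
proof -
  have sub1': "subalgebra M F1" and sub2': "subalgebra M F2"
    using sp1 sp2 sub1 sub2 unfolding subalgebra_def by auto
  have Cm: "C \<in> sets M" using C sub1 by auto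
  have im: "(indicator C :: 'a \<Rightarrow> real) \<in> borel_measurable F1" using C by simp
  have "indep_var borel (indicator C :: 'a \<Rightarrow> real) borel h"
    unfolding indep_var_eq
  proof (intro conjI)
    show "random_variable borel (indicator C :: 'a \<Rightarrow> real)"
      using measurable_from_subalg[OF sub1' im] .
    show "random_variable borel h" using measurable_from_subalg[OF sub2' hm] .
    have s1: "sigma_sets (space M) {(indicator C :: 'a \<Rightarrow> real) -` A \<inter> space M |A. A \<in> sets borel} \<subseteq> sets F1"
      using sets.sigma_sets_subset[of "{(indicator C :: 'a \<Rightarrow> real) -` A \<inter> space M |A. A \<in> sets borel}" F1]
        measurable_sets[OF im] sp1 by auto
    have s2: "sigma_sets (space M) {h -` A \<inter> space M |A. A \<in> sets borel} \<subseteq> sets F2"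
      using sets.sigma_sets_subset[of "{h -` A \<inter> space M |A. A \<in> sets borel}" F2]
        measurable_sets[OF hm] sp2 by auto
    show "indep_set (sigma_sets (space M) {(indicator C :: 'a \<Rightarrow> real) -` A \<inter> space M |A. A \<in> sets borel})
                    (sigma_sets (space M) {h -` A \<inter> space M |A. A \<in> sets borel})"
      using s1 s2 unfolding indep_set_def
      by (intro indep_sets_mono_sets[OF indep[unfolded indep_set_def]]) (auto split: bool.split)
  qed
  then have "(\<integral>x. indicator C x * h x \<partial>M) = (\<integral>x. indicator C x \<partial>M) * (\<integral>x. h x \<partial>M)"
    using hi Cm by (intro indep_var_lebesgue_integral) (auto simp: emeasure_eq_measure)
  then show ?thesis using Cm by simp
qed

lemma core:
  fixes v :: "'a \<Rightarrow> real" and s :: "'a \<Rightarrow> 'b" and PB :: "'a \<Rightarrow> 'c"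
  assumes P: "prob_space M" and vi: "integrable M v" and sm: "s \<in> measurable M S"
    and pm: "PB \<in> measurable M PP"
    and indep: "prob_space.indep_set M (sets (vimage_algebra (space M) PB PP))
                  (sets (vimage_algebra (space M) (\<lambda>\<omega>. (v \<omega>, s \<omega>)) (borel \<Otimes>\<^sub>M S)))"
    and D: "D \<in> sets (vimage_algebra (space M) (\<lambda>\<omega>. (s \<omega>, PB \<omega>)) (S \<Otimes>\<^sub>M PP))"
  shows "(LINT x:D|M. v x) = (LINT x:D|M. real_cond_exp M (vimage_algebra (space M) s S) v x)"
proof -
  interpret prob_space M by (rule P)
  define \<Omega> where "\<Omega> = space M"
  define Fs where "Fs = vimage_algebra \<Omega> s S"
  define F1 where "F1 = vimage_algebra \<Omega> PB PP"
  define F2 where "F2 = vimage_algebra \<Omega> (\<lambda>\<omega>. (v \<omega>, s \<omega>)) (borel \<Otimes>\<^sub>M S)"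
  define w where "w = real_cond_exp M Fs v"
  define f where "f = (\<lambda>\<omega>. (s \<omega>, PB \<omega>))"
  have vm: "v \<in> borel_measurable M" using vi by auto
  have "finite_measure_subalgebra M Fs"
    unfolding Fs_def \<Omega>_def
    by (intro finite_measure_subalgebra.intro finite_measure_subalgebra_axioms.intro vimage_subalg sm)
       unfold_locales
  then interpret Fsub: finite_measure_subalgebra M Fs .
  have wFs: "w \<in> borel_measurable Fs" unfolding w_def by (rule borel_measurable_cond_exp)
  have wi: "integrable M w" unfolding w_def using vi by (rule Fsub.real_cond_exp_int(1))
  have wint: "(\<integral>x. w x \<partial>M) = (\<integral>x. v x \<partial>M)" unfolding w_def using vi by (rule Fsub.real_cond_exp_int(2))
  have vsm: "(\<lambda>\<omega>. (v \<omega>, s \<omega>)) \<in> measurable M (borel \<Otimes>\<^sub>M S)" using vm sm by measurable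
  have fm: "f \<in> measurable M (S \<Otimes>\<^sub>M PP)" unfolding f_def using sm pm by measurable
  have sub1: "subalgebra M F1" unfolding F1_def \<Omega>_def by (rule vimage_subalg[OF pm])
  have sub2: "subalgebra M F2" unfolding F2_def \<Omega>_def by (rule vimage_subalg[OF vsm])
  have vs_fun: "(\<lambda>\<omega>. (v \<omega>, s \<omega>)) \<in> \<Omega> \<rightarrow> space (borel \<Otimes>\<^sub>M S)"
    using measurable_space[OF vsm] unfolding \<Omega>_def by auto
  have vsF2: "(\<lambda>\<omega>. (v \<omega>, s \<omega>)) \<in> measurable F2 (borel \<Otimes>\<^sub>M S)"
    unfolding F2_def by (rule measurable_vimage_algebra1[OF vs_fun])
  have vF2: "v \<in> borel_measurable F2"
    using measurable_compose[OF vsF2 measurable_fst] by simp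
  have sF2: "s \<in> measurable F2 S"
    using measurable_compose[OF vsF2 measurable_snd] by simp
  have idF2: "(\<lambda>x. x) \<in> measurable F2 Fs"
    unfolding Fs_def by (rule measurable_vimage_algebra2) (use sF2 in \<open>auto simp: F2_def\<close>)
  have wF2: "w \<in> borel_measurable F2"
    using measurable_compose[OF idF2 wFs] by simp
  have closedG: "{a \<times> b | a b. a \<in> sets S \<and> b \<in> sets PP} \<subseteq> Pow (space S \<times> space PP)"
    by (auto dest: sets.sets_into_space)
  have key: "(LINT x:(f -` a \<inter> \<Omega>)|M. v x) = (LINT x:(f -` a \<inter> \<Omega>)|M. w x)"
    if a: "a \<in> sigma_sets (space S \<times> space PP) {a \<times> b | a b. a \<in> sets S \<and> b \<in> sets PP}" for a
    using Int_stable_pair_measure_generator[of S PP] closedG a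
  proof (induct rule: sigma_sets_induct_disjoint)
    case (basic r)
    then obtain a1 b1 where r: "r = a1 \<times> b1" and a1: "a1 \<in> sets S" and b1: "b1 \<in> sets PP" by auto
    define A where "A = s -` a1 \<inter> \<Omega>"
    define C where "C = PB -` b1 \<inter> \<Omega>"
    have fr: "f -` r \<inter> \<Omega> = A \<inter> C" unfolding r A_def C_def f_def by auto
    have AM: "A \<in> sets M" unfolding A_def \<Omega>_def using measurable_sets[OF sm a1] .
    have AFs: "A \<in> sets Fs" unfolding A_def Fs_def by (rule in_vimage_algebra[OF a1])
    have AF2: "A \<in> sets F2"
    proof -
      have "(\<lambda>\<omega>. (v \<omega>, s \<omega>)) -` (space borel \<times> a1) \<inter> \<Omega> \<in> sets F2"
        unfolding F2_def by (intro in_vimage_algebra pair_measureI a1) auto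
      moreover have "(\<lambda>\<omega>. (v \<omega>, s \<omega>)) -` (space borel \<times> a1) \<inter> \<Omega> = A"
        unfolding A_def by auto
      ultimately show ?thesis by simp
    qed
    have CF1: "C \<in> sets F1" unfolding C_def F1_def by (rule in_vimage_algebra[OF b1])
    have ind: "(\<integral>x. indicator C x * h x \<partial>M) = prob C * (\<integral>x. h x \<partial>M)"
      if "h \<in> borel_measurable F2" "integrable M h" for h :: "'a \<Rightarrow> real"
      using indep that CF1 sub1 sub2
      by (intro indep_indicator_integral[of F1 F2])
         (auto simp: F1_def F2_def \<Omega>_def subalgebra_def)
    have eq: "(LINT x:(A \<inter> C)|M. g x) = prob C * (LINT x:A|M. g x)"
      if "g \<in> borel_measurable F2" "integrable M g" for g :: "'a \<Rightarrow> real"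
    proof -
      have "(LINT x:(A \<inter> C)|M. g x) = (\<integral>x. indicator C x * (indicator A x * g x) \<partial>M)"
        unfolding set_lebesgue_integral_def
        by (intro Bochner_Integration.integral_cong) (auto split: split_indicator)
      also have "\<dots> = prob C * (\<integral>x. indicator A x * g x \<partial>M)"
      proof (rule ind)
        show "(\<lambda>x. indicator A x * g x) \<in> borel_measurable F2"
          by (intro borel_measurable_times borel_measurable_indicator AF2 that(1))
        show "integrable M (\<lambda>x. indicator A x * g x)"
          using integrable_mult_indicator[OF AM that(2)] by simp
      qed
      finally show ?thesis unfolding set_lebesgue_integral_def by simp
    qed
    have "(LINT x:A|M. v x) = (LINT x:A|M. w x)"
      unfolding w_def using vi AFs by (rule Fsub.real_cond_exp_intA)
    then show ?case unfolding fr using eq[OF vF2 vi] eq[OF wF2 wi] by simp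
  next
    case empty
    then show ?case by (simp add: set_lebesgue_integral_def)
  next
    case (compl r)
    have rs: "r \<in> sets (S \<Otimes>\<^sub>M PP)" using compl(1) by (simp add: sets_pair_measure)
    have fr: "f -` r \<inter> \<Omega> \<in> sets M" unfolding \<Omega>_def using measurable_sets[OF fm rs] .
    have fc: "f -` (space S \<times> space PP - r) \<inter> \<Omega> = space M - (f -` r \<inter> \<Omega>)"
      using measurable_space[OF fm] unfolding \<Omega>_def by (auto simp: space_pair_measure)
    show ?case unfolding fc
      using set_integral_compl_space[OF vi fr] set_integral_compl_space[OF wi fr] wint compl(2)
      by simp
  next
    case (union r)
    have rs: "\<And>i. r i \<in> sets (S \<Otimes>\<^sub>M PP)" using union(2) by (auto simp add: sets_pair_measure)
    have fr: "\<And>i. f -` r i \<inter> \<Omega> \<in> sets M" unfolding \<Omega>_def using measurable_sets[OF fm rs] .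
    have fu: "f -` (\<Union>i. r i) \<inter> \<Omega> = (\<Union>i. f -` r i \<inter> \<Omega>)" by auto
    have dj: "\<And>i j. i \<noteq> j \<Longrightarrow> (f -` r i \<inter> \<Omega>) \<inter> (f -` r j \<inter> \<Omega>) = {}"
      using union(1) unfolding disjoint_family_on_def by blast
    have um: "(\<Union>i. f -` r i \<inter> \<Omega>) \<in> sets M" using fr by (intro sets.countable_nat_UN) auto
    have si: "set_integrable M (\<Union>i. f -` r i \<inter> \<Omega>) g" if "integrable M g" for g :: "'a \<Rightarrow> real"
      unfolding set_integrable_def using integrable_mult_indicator[OF um that] .
    show ?case unfolding fu
      using lebesgue_integral_countable_add[OF fr dj si[OF vi]]
        lebesgue_integral_countable_add[OF fr dj si[OF wi]] union(3) by simp
  qed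
  obtain a where a: "a \<in> sets (S \<Otimes>\<^sub>M PP)" and Da: "D = f -` a \<inter> \<Omega>"
  proof -
    have "f \<in> space M \<rightarrow> space (S \<Otimes>\<^sub>M PP)" using measurable_space[OF fm] by auto
    then have "sets (vimage_algebra (space M) f (S \<Otimes>\<^sub>M PP)) = {f -` A \<inter> space M |A. A \<in> sets (S \<Otimes>\<^sub>M PP)}"
      by (rule sets_vimage_algebra2)
    then show ?thesis using D that unfolding f_def \<Omega>_def by auto
  qed
  show ?thesis using key[of a] a Da unfolding w_def Fs_def \<Omega>_def by (simp add: sets_pair_measure)
qed

theorem lemma1:
  fixes M :: "'a measure" and S :: "'b measure"
    and v :: "'a \<Rightarrow> real" and s :: "'a \<Rightarrow> 'b"
    and B Z X Y \<theta> :: "real \<Rightarrow> 'a \<Rightarrow> real"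
    and \<sigma>Z T :: real
  assumes P: "prob_space M"
    and v_meas: "v \<in> borel_measurable M"
    and v_sq: "integrable M (\<lambda>\<omega>. (v \<omega>)\<^sup>2)"
    and s_meas: "s \<in> measurable M S"
    and BM: "std_brownian_motion M B"
    and indep: "prob_space.indep_set M
                  (sets (vimage_algebra (space M) (path_on {0..} B) (PiM {0..} (\<lambda>_. borel))))
                  (sets (vimage_algebra (space M) (\<lambda>\<omega>. (v \<omega>, s \<omega>)) (borel \<Otimes>\<^sub>M S)))"
    and sigZ: "\<sigma>Z > 0"
    and Z_def: "Z = (\<lambda>t \<omega>. \<sigma>Z * B t \<omega>)"
    and T: "0 \<le> T"
    and \<theta>_adapted: "\<forall>t\<ge>0. \<theta> t \<in> borel_measurable (sig_signal_noise M S s Z t)"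
    and \<theta>_prog: "\<forall>t\<ge>0. (\<lambda>(u, \<omega>). \<theta> u \<omega>)
                  \<in> borel_measurable (restrict_space borel {0..t} \<Otimes>\<^sub>M sig_signal_noise M S s Z t)"
    and \<theta>_int: "\<forall>\<omega>\<in>space M. set_integrable lborel {0..T} (\<lambda>u. \<theta> u \<omega>)"
    and X_def: "X = (\<lambda>t \<omega>. LINT u:{0..t}|lborel. \<theta> u \<omega>)"
    and Y_def: "Y = (\<lambda>t \<omega>. X t \<omega> + Z t \<omega>)"
    and meas_YT: "\<exists>g. g \<in> borel_measurable (vimage_algebra (space M) (Y T) borel) \<and>
                  (AE \<omega> in M. g \<omega> = real_cond_exp M (vimage_algebra (space M) s S) v \<omega>)"
  shows "AE \<omega> in M. real_cond_exp M (vimage_algebra (space M) s S) v \<omega>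
                   = real_cond_exp M (sig_path M Y T) v \<omega>"
proof -
  interpret prob_space M by (rule P)
  define \<Omega> where "\<Omega> = space M"
  define PB where "PB = path_on {0..} B"
  define PP where "PP = (PiM {0..} (\<lambda>_. borel) :: (real \<Rightarrow> real) measure)"
  define f where "f = (\<lambda>\<omega>. (s \<omega>, PB \<omega>))"
  define H where "H = vimage_algebra \<Omega> f (S \<Otimes>\<^sub>M PP)"
  define G where "G = sig_path M Y T"
  define Fs where "Fs = vimage_algebra \<Omega> s S"
  define w where "w = real_cond_exp M Fs v"
  have Bm: "\<And>t. t \<ge> 0 \<Longrightarrow> B t \<in> borel_measurable M"
    using BM unfolding std_brownian_motion_def by auto
  have pm: "PB \<in> measurable M PP"
    unfolding PB_def PP_def path_on_def by (intro measurable_restrict Bm) auto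
  have vi: "integrable M v"
  proof (rule Bochner_Integration.integrable_bound)
    show "integrable M (\<lambda>x. 1 + (v x)\<^sup>2)" using v_sq by simp
    show "v \<in> borel_measurable M" by (rule v_meas)
    show "AE x in M. norm (v x) \<le> norm (1 + (v x)\<^sup>2)"
    proof (intro AE_I2)
      fix x
      have "\<bar>v x\<bar> \<le> 1 + (v x)\<^sup>2"
      proof (cases "\<bar>v x\<bar> \<le> 1")
        case True then show ?thesis by (simp add: add_increasing2)
      next
        case False
        then have "\<bar>v x\<bar> * 1 \<le> \<bar>v x\<bar> * \<bar>v x\<bar>" by (intro mult_left_mono) auto
        then have "\<bar>v x\<bar> \<le> (v x)\<^sup>2" by (simp add: power2_eq_square abs_mult_self_eq)
        then show ?thesis by simp
      qed
      then show "norm (v x) \<le> norm (1 + (v x)\<^sup>2)" by simp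
    qed
  qed
  have fm: "f \<in> measurable M (S \<Otimes>\<^sub>M PP)" unfolding f_def using s_meas pm by measurable
  have f_fun: "f \<in> \<Omega> \<rightarrow> space (S \<Otimes>\<^sub>M PP)" using measurable_space[OF fm] unfolding \<Omega>_def by auto
  have fH: "f \<in> measurable H (S \<Otimes>\<^sub>M PP)" unfolding H_def by (rule measurable_vimage_algebra1[OF f_fun])
  have sH: "s \<in> measurable H S" using measurable_compose[OF fH measurable_fst] by (simp add: f_def)
  have PBH: "PB \<in> measurable H PP" using measurable_compose[OF fH measurable_snd] by (simp add: f_def)
  have BH: "B t \<in> borel_measurable H" if t: "t \<ge> 0" for t
  proof -
    have ct: "(\<lambda>x. x t) \<in> measurable PP borel"
      using measurable_component_singleton[of t "{0..}" "\<lambda>_. borel"] t unfolding PP_def by simp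
    have "(\<lambda>\<omega>. PB \<omega> t) \<in> borel_measurable H"
      using measurable_compose[OF PBH ct] .
    moreover have "(\<lambda>\<omega>. PB \<omega> t) = B t" using t unfolding PB_def path_on_def by auto
    ultimately show ?thesis by simp
  qed
  have HM: "subalgebra M H" unfolding H_def \<Omega>_def by (rule vimage_subalg[OF fm])
  have spH: "space H = \<Omega>" unfolding H_def by simp
  have XH: "X t \<in> borel_measurable H" if t: "t \<ge> 0" for t
  proof -
    define R where "R = restrict_space (borel :: real measure) {0..t}"
    define cl where "cl = (\<lambda>u::real. max 0 (min t u))"
    have idSSN: "(\<lambda>x. x) \<in> measurable H (sig_signal_noise M S s Z t)"
      unfolding sig_signal_noise_def
    proof (rule measurable_vimage_algebra2)
      show "(\<lambda>x. x) \<in> space H \<rightarrow> space M" using spH \<Omega>_def by auto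
      have pZ: "path_on {0..t} Z \<in> measurable H (PiM {0..t} (\<lambda>_. borel))"
        unfolding path_on_def Z_def
        by (intro measurable_restrict borel_measurable_times borel_measurable_const BH) auto
      show "(\<lambda>x. (s x, path_on {0..t} Z x)) \<in> measurable H (S \<Otimes>\<^sub>M PiM {0..t} (\<lambda>_. borel))"
        by (rule measurable_Pair[OF sH pZ])
    qed
    have th: "(\<lambda>p. \<theta> (fst p) (snd p)) \<in> borel_measurable (R \<Otimes>\<^sub>M H)"
    proof -
      have "(\<lambda>p. (fst p, snd p)) \<in> measurable (R \<Otimes>\<^sub>M H) (R \<Otimes>\<^sub>M sig_signal_noise M S s Z t)"
        by (intro measurable_Pair measurable_fst measurable_compose[OF measurable_snd idSSN])
      from measurable_compose[OF this \<theta>_prog[rule_format, OF t, folded R_def]]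
      show ?thesis by simp
    qed
    have clm: "cl \<in> measurable lborel R"
      unfolding R_def
    proof (rule measurable_restrict_space2)
      show "cl \<in> space lborel \<rightarrow> {0..t}" using t unfolding cl_def by auto
      show "cl \<in> borel_measurable lborel" unfolding cl_def by measurable
    qed
    have gm: "(\<lambda>p. (cl (snd p), fst p)) \<in> measurable (H \<Otimes>\<^sub>M lborel) (R \<Otimes>\<^sub>M H)"
      by (intro measurable_Pair measurable_fst measurable_compose[OF measurable_snd clm])
    have k1: "(\<lambda>p. \<theta> (cl (snd p)) (fst p)) \<in> borel_measurable (H \<Otimes>\<^sub>M lborel)"
      using measurable_compose[OF gm th] by simp
    have k2: "(\<lambda>p. indicator {0..t} (snd p) :: real) \<in> borel_measurable (H \<Otimes>\<^sub>M lborel)"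
      by (intro measurable_compose[OF measurable_snd] borel_measurable_indicator) auto
    have "case_prod (\<lambda>\<omega> u. indicator {0..t} u * \<theta> (cl u) \<omega>) \<in> borel_measurable (H \<Otimes>\<^sub>M lborel)"
      using borel_measurable_times[OF k2 k1] by (simp add: case_prod_beta)
    then have "(\<lambda>\<omega>. \<integral>u. indicator {0..t} u * \<theta> (cl u) \<omega> \<partial>lborel) \<in> borel_measurable H"
      by (rule lborel.borel_measurable_lebesgue_integral)
    moreover have "(\<lambda>\<omega>. \<integral>u. indicator {0..t} u * \<theta> (cl u) \<omega> \<partial>lborel) = X t"
    proof
      fix \<omega>
      show "(\<integral>u. indicator {0..t} u * \<theta> (cl u) \<omega> \<partial>lborel) = X t \<omega>"
        unfolding X_def set_lebesgue_integral_def
        by (rule Bochner_Integration.integral_cong) (auto simp: cl_def split: split_indicator)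
    qed
    ultimately show ?thesis by simp
  qed
  have YH: "Y t \<in> borel_measurable H" if t: "t \<ge> 0" for t
    unfolding Y_def Z_def using XH[OF t] BH[OF t]
    by (intro borel_measurable_add borel_measurable_times borel_measurable_const) auto
  have pathYH: "path_on {0..T} Y \<in> measurable H (PiM {0..T} (\<lambda>_. borel))"
    unfolding path_on_def by (intro measurable_restrict YH) auto
  have GH: "sets G \<subseteq> sets H"
    using vimage_sets_le[OF pathYH spH] unfolding G_def sig_path_def \<Omega>_def by simp
  have subG: "subalgebra M G"
    using GH HM unfolding subalgebra_def G_def sig_path_def by auto
  have "finite_measure_subalgebra M G"
    by (intro finite_measure_subalgebra.intro finite_measure_subalgebra_axioms.intro subG)
       unfold_locales
  then interpret Gsub: finite_measure_subalgebra M G .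
  have "finite_measure_subalgebra M Fs"
    unfolding Fs_def \<Omega>_def
    by (intro finite_measure_subalgebra.intro finite_measure_subalgebra_axioms.intro vimage_subalg s_meas)
       unfold_locales
  then interpret Fsub: finite_measure_subalgebra M Fs .
  have wi: "integrable M w" unfolding w_def using vi by (rule Fsub.real_cond_exp_int(1))
  have wM: "w \<in> borel_measurable M" unfolding w_def by (rule borel_measurable_cond_exp2)
  obtain g where gYT: "g \<in> borel_measurable (vimage_algebra (space M) (Y T) borel)"
    and gw: "AE \<omega> in M. g \<omega> = w \<omega>"
    using meas_YT unfolding w_def Fs_def \<Omega>_def by blast
  have YTG: "Y T \<in> borel_measurable G"
  proof -
    have pf: "path_on {0..T} Y \<in> \<Omega> \<rightarrow> space (PiM {0..T} (\<lambda>_. borel))"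
      using measurable_space[OF pathYH] spH by auto
    have cT: "(\<lambda>x. x T) \<in> measurable (PiM {0..T} (\<lambda>_. borel)) borel"
      using measurable_component_singleton[of T "{0..T}" "\<lambda>_. borel"] T by simp
    have "(\<lambda>\<omega>. path_on {0..T} Y \<omega> T) \<in> borel_measurable G"
      unfolding G_def sig_path_def \<Omega>_def[symmetric]
      using measurable_compose[OF measurable_vimage_algebra1[OF pf] cT] .
    moreover have "(\<lambda>\<omega>. path_on {0..T} Y \<omega> T) = Y T" using T unfolding path_on_def by auto
    ultimately show ?thesis by simp
  qed
  have gG: "g \<in> borel_measurable G"
  proof -
    have "(\<lambda>x. x) \<in> measurable G (vimage_algebra (space M) (Y T) borel)"
      by (rule measurable_vimage_algebra2) (use YTG in \<open>auto simp: G_def sig_path_def\<close>)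
    from measurable_compose[OF this gYT] show ?thesis by simp
  qed
  have gM: "g \<in> borel_measurable M" by (rule measurable_from_subalg[OF subG gG])
  have gi: "integrable M g" using wi integrable_cong_AE[OF gM wM gw] by simp
  have "AE x in M. real_cond_exp M G v x = g x"
  proof (rule Gsub.real_cond_exp_charact)
    fix A assume AG: "A \<in> sets G"
    then have AH: "A \<in> sets H" using GH by auto
    then have AM: "A \<in> sets M" using HM unfolding subalgebra_def by auto
    have indep': "indep_set (sets (vimage_algebra (space M) PB PP))
                  (sets (vimage_algebra (space M) (\<lambda>\<omega>. (v \<omega>, s \<omega>)) (borel \<Otimes>\<^sub>M S)))"
      using indep unfolding PB_def PP_def by simp
    have "(LINT x:A|M. v x) = (LINT x:A|M. w x)"
      unfolding w_def Fs_def \<Omega>_def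
      by (rule core[OF P vi s_meas pm indep' AH[unfolded H_def f_def \<Omega>_def]])
    also have "\<dots> = (LINT x:A|M. g x)"
      unfolding set_lebesgue_integral_def
      using gw AM wM gM by (intro integral_cong_AE) auto
    finally show "(LINT x:A|M. v x) = (LINT x:A|M. g x)" .
  qed (use vi gi gG in auto)
  then show ?thesis using gw unfolding w_def Fs_def \<Omega>_def G_def by auto
qed

end
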